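(* Let $\mathcal Y=\{1,\dots,n\}$, $c\in(0,1)$ constant, $\mathcal H_{\rm all}$, $\mathcal R_{\rm all}$ the families of all measurable functions $\mathcal X\times\mathcal Y\to\mathbb R$ and $\mathcal X\to\mathbb R$. Let $\ell$ be a multi-class surrogate loss and $\Phi$ non-increasing with $\Phi(t)\ge1_{t\le0}$. Assume there are non-decreasing concave $\Gamma_1,\Gamma_2$ such that for all distributions, all $h\in\mathcal H_{\rm all}$ and $r\in\mathcal R_{\rm all}$: $\mathcal E_{\ell_{0-1}}(h)-\mathcal E^*_{\ell_{0-1}}(\mathcal H_{\rm all})\le\Gamma_1(\mathcal E_\ell(h)-\mathcal E^*_\ell(\mathcal H_{\rm all}))$ (distributions over $\mathcal X\times\mathcal Y$) and $\mathcal E_{\ell^{\rm binary}_{0-1}}(r)-\mathcal E^*_{\ell^{\rm binary}_{0-1}}(\mathcal R_{\rm all})\le\Gamma_2(\mathcal E_\Phi(r)-\mathcal E^*_\Phi(\mathcal R_{\rm all}))$ (distributions over $\mathcal X\times\{-1,+1\}$). Then for all $h\in\mathcal H_{\rm all}$, $r\in\mathcal R_{\rm all}$ and any distribution over $\mathcal X\times\mathcal Y$, $$\mathcal E_{\mathsf L_{\rm abs}}(h,r)-\mathcal E^*_{\mathsf L_{\rm abs}}(\mathcal H_{\rm all},\mathcal R_{\rm all})\le\Gamma_1\big(\mathcal E_\ell(h)-\mathcal E^*_\ell(\mathcal H_{\rm all})\big)+(1+c)\Gamma_2\Big(\big(\mathcal E_{\ell_{\Phi,h}}(r)-\mathcal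 E^*_{\ell_{\Phi,h}}(\mathcal R_{\rm all})\big)/c\Big),$$ where, when $\Gamma_2$ is linear, the bound holds with the constant factors $(1+c)$ and $1/c$ removed.
   Context: $\mathsf h(x)=\arg\max_y h(x,y)$ with fixed tie-breaking. $\ell_{0-1}(h,x,y)=1_{\mathsf h(x)\ne y}$; $\mathsf L_{\rm abs}(h,r,x,y)=1_{\mathsf h(x)\ne y}1_{r(x)>0}+c\,1_{r(x)\le0}$; $\ell_{\Phi,h}(r,x,y)=1_{\mathsf h(x)\ne y}\Phi(-r(x))+c\,\Phi(r(x))$. For $y\in\{-1,+1\}$: $\ell^{\rm binary}_{0-1}(r,x,y)=1_{y\ne\mathrm{sign}(r(x))}$, $\mathrm{sign}(t)=1_{t>0}-1_{t\le0}$, $\Phi$-loss $\Phi(yr(x))$. $\mathcal E$ denotes expected loss and $\mathcal E^*$ its infimum over the indicated set(s). *)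

theory Defs
  imports "HOL-Probability.Probability"
begin

definition hpred :: "nat \<Rightarrow> ('x \<Rightarrow> nat \<Rightarrow> real) \<Rightarrow> 'x \<Rightarrow> nat" where
  "hpred n h x = (LEAST y. y \<in> {1..n} \<and> (\<forall>y'\<in>{1..n}. h x y' \<le> h x y))"

text \<open>All measurable functions X x Y -> R (extended by 0 outside X x Y, so that
  they correspond bijectively to measurable functions on X x Y).\<close>
definition Hall :: "'x measure \<Rightarrow> nat \<Rightarrow> ('x \<Rightarrow> nat \<Rightarrow> real) set" where
  "Hall MX n = {h. (\<forall>y\<in>{1..n}. (\<lambda>x. h x y) \<in> borel_measurable MX) \<and>
                   (\<forall>x y. x \<notin> space MX \<or> y \<notin> {1..n} \<longrightarrow> h x y = 0)}"

definition Rall :: "'x measure \<Rightarrow> ('x \<Rightarrow> real) set" where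
  "Rall MX = {r. r \<in> borel_measurable MX \<and> (\<forall>x. x \<notin> space MX \<longrightarrow> r x = 0)}"

definition multi_dist :: "'x measure \<Rightarrow> nat \<Rightarrow> ('x \<times> nat) measure \<Rightarrow> bool" where
  "multi_dist MX n D \<longleftrightarrow> prob_space D \<and> sets D = sets (MX \<Otimes>\<^sub>M count_space {1..n})"

definition bin_dist :: "'x measure \<Rightarrow> ('x \<times> int) measure \<Rightarrow> bool" where
  "bin_dist MX B \<longleftrightarrow> prob_space B \<and> sets B = sets (MX \<Otimes>\<^sub>M count_space {-1, 1})"

definition eloss :: "('a \<times> 'b) measure \<Rightarrow> ('a \<Rightarrow> 'b \<Rightarrow> real) \<Rightarrow> ennreal" where
  "eloss D f = (\<integral>\<^sup>+ z. ennreal (f (fst z) (snd z)) \<partial>D)"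

definition excess :: "('a \<times> 'b) measure \<Rightarrow> 'i set \<Rightarrow> ('i \<Rightarrow> 'a \<Rightarrow> 'b \<Rightarrow> real) \<Rightarrow> 'i \<Rightarrow> real" where
  "excess D S L i = enn2real (eloss D (L i)) - enn2real (INF j\<in>S. eloss D (L j))"

definition zo_loss :: "nat \<Rightarrow> ('x \<Rightarrow> nat \<Rightarrow> real) \<Rightarrow> 'x \<Rightarrow> nat \<Rightarrow> real" where
  "zo_loss n h x y = (if hpred n h x \<noteq> y then 1 else 0)"

definition sgn01 :: "real \<Rightarrow> int" where
  "sgn01 t = (if t > 0 then 1 else -1)"

definition bin_zo_loss :: "('x \<Rightarrow> real) \<Rightarrow> 'x \<Rightarrow> int \<Rightarrow> real" where
  "bin_zo_loss r x y = (if y \<noteq> sgn01 (r x) then 1 else 0)"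

definition phi_loss :: "(real \<Rightarrow> real) \<Rightarrow> ('x \<Rightarrow> real) \<Rightarrow> 'x \<Rightarrow> int \<Rightarrow> real" where
  "phi_loss \<Phi> r x y = \<Phi> (real_of_int y * r x)"

definition abs_loss :: "nat \<Rightarrow> real \<Rightarrow> ('x \<Rightarrow> nat \<Rightarrow> real) \<times> ('x \<Rightarrow> real) \<Rightarrow> 'x \<Rightarrow> nat \<Rightarrow> real" where
  "abs_loss n c hr x y =
     (if hpred n (fst hr) x \<noteq> y \<and> snd hr x > 0 then 1 else 0) + (if snd hr x \<le> 0 then c else 0)"

definition lphi_loss :: "nat \<Rightarrow> real \<Rightarrow> (real \<Rightarrow> real) \<Rightarrow> ('x \<Rightarrow> nat \<Rightarrow> real) \<Rightarrow> ('x \<Rightarrow> real) \<Rightarrow> 'x \<Rightarrow> nat \<Rightarrow> real" where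
  "lphi_loss n c \<Phi> h r x y = (if hpred n h x \<noteq> y then 1 else 0) * \<Phi> (- r x) + c * \<Phi> (r x)"

end

theory Submission
  imports Defs
begin

lemma hpred_meas:
  assumes "h \<in> Hall MX n"
  shows "(\<lambda>x. hpred n h x) \<in> measurable MX (count_space UNIV)"
proof -
  have [measurable]: "\<And>y. y \<in> {1..n} \<Longrightarrow> (\<lambda>x. h x y) \<in> borel_measurable MX"
    using assms by (auto simp: Hall_def)
  have "\<And>i. (\<lambda>x. i \<in> {1..n} \<and> (\<forall>y'\<in>{1..n}. h x y' \<le> h x i)) \<in> measurable MX (count_space UNIV)"
  proof -
    fix i
    show "(\<lambda>x. i \<in> {1..n} \<and> (\<forall>y'\<in>{1..n}. h x y' \<le> h x i)) \<in> measurable MX (count_space UNIV)"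
    proof (cases "i \<in> {1..n}")
      case True
      then show ?thesis by measurable
    qed simp
  qed
  then show ?thesis unfolding hpred_def by (rule measurable_Least)
qed

lemma hpred_meas_D:
  assumes "h \<in> Hall MX n" "sets D = sets (MX \<Otimes>\<^sub>M count_space {1..n})"
  shows "(\<lambda>z. hpred n h (fst z)) \<in> measurable D (count_space UNIV)"
    "snd \<in> measurable D (count_space UNIV)"
    "fst \<in> measurable D MX"
proof -
  show "fst \<in> measurable D MX" unfolding measurable_cong_sets[OF assms(2) refl] by simp
  then show "(\<lambda>z. hpred n h (fst z)) \<in> measurable D (count_space UNIV)"
    using hpred_meas[OF assms(1)] by (rule measurable_compose)
  have "snd \<in> measurable (MX \<Otimes>\<^sub>M count_space {1..n}) (count_space UNIV)"
    by (rule measurable_compose[OF measurable_snd]) simp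
  then show "snd \<in> measurable D (count_space UNIV)" unfolding measurable_cong_sets[OF assms(2) refl] by simp
qed

lemma pred_eq_nat[measurable (raw)]:
  fixes f g :: "'a \<Rightarrow> 'b::countable"
  assumes [measurable]: "f \<in> measurable M (count_space UNIV)" "g \<in> measurable M (count_space UNIV)"
  shows "Measurable.pred M (\<lambda>z. f z = g z)"
proof -
  have "(\<lambda>z. f z = g z) = (\<lambda>z. \<exists>y::'b. f z = y \<and> g z = y)" by auto
  moreover have "Measurable.pred M (\<lambda>z. \<exists>y::'b. f z = y \<and> g z = y)" by measurable
  ultimately show ?thesis by simp
qed

lemma meas_zo:
  assumes "h \<in> Hall MX n" "sets D = sets (MX \<Otimes>\<^sub>M count_space {1..n})"
  shows "(\<lambda>z. ennreal (zo_loss n h (fst z) (snd z))) \<in> borel_measurable D"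
proof -
  note [measurable] = hpred_meas_D[OF assms]
  show ?thesis unfolding zo_loss_def by measurable
qed

lemma meas_abs:
  assumes "h \<in> Hall MX n" "r \<in> Rall MX" "sets D = sets (MX \<Otimes>\<^sub>M count_space {1..n})"
  shows "(\<lambda>z. ennreal (abs_loss n c (h, r) (fst z) (snd z))) \<in> borel_measurable D"
proof -
  note [measurable] = hpred_meas_D[OF assms(1,3)]
  have [measurable]: "r \<in> borel_measurable MX" using assms(2) by (simp add: Rall_def)
  show ?thesis unfolding abs_loss_def prod.sel by measurable
qed

lemma Phi_meas:
  assumes "antimono (\<Phi>::real\<Rightarrow>real)"
  shows "\<Phi> \<in> borel_measurable borel"
proof -
  have "mono (\<lambda>t. \<Phi> (- t))" using assms by (auto simp: mono_def antimono_def)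
  then have "(\<lambda>t. \<Phi> (- t)) \<in> borel_measurable borel" by (rule borel_measurable_mono)
  then have "(\<lambda>t. \<Phi> (- (- t))) \<in> borel_measurable borel" by measurable
  then show ?thesis by simp
qed

lemma INF_cmult:
  fixes X :: "'i \<Rightarrow> ennreal"
  assumes "k > 0"
  shows "(INF i\<in>S. ennreal k * X i) = ennreal k * (INF i\<in>S. X i)"
proof (rule antisym)
  show "ennreal k * (INF i\<in>S. X i) \<le> (INF i\<in>S. ennreal k * X i)"
    by (rule INF_greatest) (intro mult_left_mono INF_lower, auto)
  have kk: "ennreal (1/k) * ennreal k = 1" using assms
    by (simp add: ennreal_mult''[symmetric])
  have "ennreal (1/k) * (INF i\<in>S. ennreal k * X i) \<le> (INF i\<in>S. X i)"
  proof (rule INF_greatest)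
    fix i assume "i \<in> S"
    then have "ennreal (1/k) * (INF i\<in>S. ennreal k * X i) \<le> ennreal (1/k) * (ennreal k * X i)"
      by (intro mult_left_mono INF_lower) auto
    also have "\<dots> = X i" using kk by (simp add: mult.assoc[symmetric])
    finally show "ennreal (1/k) * (INF i\<in>S. ennreal k * X i) \<le> X i" .
  qed
  then have "ennreal k * (ennreal (1/k) * (INF i\<in>S. ennreal k * X i)) \<le> ennreal k * (INF i\<in>S. X i)"
    by (rule mult_left_mono) simp
  then show "(INF i\<in>S. ennreal k * X i) \<le> ennreal k * (INF i\<in>S. X i)"
    using kk by (simp add: mult.assoc[symmetric] mult.commute)
qed

lemma B_integral:
  fixes D :: "('x \<times> nat) measure" and w :: "'x \<times> nat \<Rightarrow> real"
    and f :: "'x \<times> int \<Rightarrow> ennreal"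
  assumes pD: "prob_space D" and sD: "sets D = sets (MX \<Otimes>\<^sub>M count_space {1..n})"
    and wm: "(\<lambda>z. ennreal (w z)) \<in> borel_measurable D"
    and fm: "f \<in> borel_measurable (MX \<Otimes>\<^sub>M count_space {-1,1::int})"
  shows "(\<integral>\<^sup>+z. f z \<partial>(distr (density (D \<Otimes>\<^sub>M count_space {-1,1::int})
            (\<lambda>q. ennreal k * (if snd q = 1 then ennreal c else ennreal (w (fst q)))))
            (MX \<Otimes>\<^sub>M count_space {-1,1}) (\<lambda>q. (fst (fst q), snd q))))
       = ennreal k * (\<integral>\<^sup>+xy. (ennreal c * f (fst xy, 1) + ennreal (w xy) * f (fst xy, -1)) \<partial>D)"
proof -
  let ?P = "D \<Otimes>\<^sub>M count_space {-1,1::int}"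
  let ?W = "\<lambda>q. ennreal k * (if snd q = 1 then ennreal c else ennreal (w (fst q)))"
  have [measurable]: "fst \<in> measurable D MX" unfolding measurable_cong_sets[OF sD refl] by simp
  note [measurable] = wm fm
  interpret D: prob_space D by (rule pD)
  interpret C: finite_measure "count_space {-1,1::int}" by (rule finite_measure_count_space) simp
  interpret P: pair_sigma_finite D "count_space {-1,1::int}" ..
  have mp[measurable]: "(\<lambda>q. (fst (fst q), snd q)) \<in> measurable ?P (MX \<Otimes>\<^sub>M count_space {-1,1::int})"
    by measurable
  have Wm[measurable]: "?W \<in> borel_measurable ?P" by measurable
  have "(\<integral>\<^sup>+z. f z \<partial>(distr (density ?P ?W) (MX \<Otimes>\<^sub>M count_space {-1,1}) (\<lambda>q. (fst (fst q), snd q))))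
      = (\<integral>\<^sup>+q. f (fst (fst q), snd q) \<partial>(density ?P ?W))"
    by (rule nn_integral_distr) (simp_all add: measurable_cong_sets[OF sets_density refl])
  also have "\<dots> = (\<integral>\<^sup>+q. ?W q * f (fst (fst q), snd q) \<partial>?P)"
    by (rule nn_integral_density) measurable
  also have "\<dots> = (\<integral>\<^sup>+xy. \<integral>\<^sup>+s. ?W (xy, s) * f (fst xy, s) \<partial>count_space {-1,1::int} \<partial>D)"
  proof -
    have "(\<lambda>q. ?W q * f (fst (fst q), snd q)) \<in> borel_measurable ?P" by measurable
    from C.nn_integral_fst[OF this] show ?thesis by simp
  qed
  also have "\<dots> = (\<integral>\<^sup>+xy. ennreal k * (ennreal c * f (fst xy, 1) + ennreal (w xy) * f (fst xy, -1)) \<partial>D)"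
    by (rule nn_integral_cong) (simp add: nn_integral_count_space_finite distrib_left mult.assoc add.commute)
  also have "\<dots> = ennreal k * (\<integral>\<^sup>+xy. (ennreal c * f (fst xy, 1) + ennreal (w xy) * f (fst xy, -1)) \<partial>D)"
    by (rule nn_integral_cmult) measurable
  finally show ?thesis .
qed

lemma ennreal_lin:
  assumes "0 \<le> a" "0 \<le> b" "0 \<le> x" "0 \<le> y"
  shows "ennreal a * ennreal x + ennreal b * ennreal y = ennreal (a*x + b*y)"
  using assms by (simp add: ennreal_plus ennreal_mult)

lemma eloss_le:
  assumes "prob_space D" "\<And>x y. f x y \<le> K"
  shows "eloss D f \<le> ennreal K"
proof -
  interpret prob_space D by fact
  have "eloss D f \<le> (\<integral>\<^sup>+z. ennreal K \<partial>D)"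
    unfolding eloss_def by (rule nn_integral_mono) (simp add: ennreal_leI assms(2))
  also have "\<dots> = ennreal K" by (simp add: emeasure_space_1)
  finally show ?thesis .
qed

lemma meas_phi:
  assumes "antimono \<Phi>" "r \<in> Rall MX"
  shows "(\<lambda>z. ennreal (phi_loss \<Phi> r (fst z) (snd z))) \<in> borel_measurable (MX \<Otimes>\<^sub>M count_space {-1,1::int})"
proof -
  have [measurable]: "\<Phi> \<in> borel_measurable borel" by (rule Phi_meas[OF assms(1)])
  have [measurable]: "r \<in> borel_measurable MX" using assms(2) by (simp add: Rall_def)
  have [measurable]: "fst \<in> measurable (MX \<Otimes>\<^sub>M count_space {-1,1::int}) MX" by simp
  have [measurable]: "snd \<in> measurable (MX \<Otimes>\<^sub>M count_space {-1,1::int}) (count_space UNIV)"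
    by (rule measurable_compose[OF measurable_snd]) simp
  have [measurable]: "(\<lambda>z. r (fst z)) \<in> borel_measurable (MX \<Otimes>\<^sub>M count_space {-1,1::int})"
    by (rule measurable_compose[OF measurable_fst]) simp
  show ?thesis unfolding phi_loss_def by measurable
qed

lemma meas_bin:
  assumes "r \<in> Rall MX"
  shows "(\<lambda>z. ennreal (bin_zo_loss r (fst z) (snd z))) \<in> borel_measurable (MX \<Otimes>\<^sub>M count_space {-1,1::int})"
proof -
  have [measurable]: "r \<in> borel_measurable MX" using assms by (simp add: Rall_def)
  have [measurable]: "fst \<in> measurable (MX \<Otimes>\<^sub>M count_space {-1,1::int}) MX" by simp
  have [measurable]: "snd \<in> measurable (MX \<Otimes>\<^sub>M count_space {-1,1::int}) (count_space UNIV)"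
    by (rule measurable_compose[OF measurable_snd]) simp
  have [measurable]: "(\<lambda>z. r (fst z)) \<in> borel_measurable (MX \<Otimes>\<^sub>M count_space {-1,1::int})"
    by (rule measurable_compose[OF measurable_fst]) simp
  show ?thesis unfolding bin_zo_loss_def sgn01_def by measurable
qed

theorem corollary7:
  fixes MX :: "'x measure" and n :: nat and c :: real
    and sl :: "('x \<Rightarrow> nat \<Rightarrow> real) \<Rightarrow> 'x \<Rightarrow> nat \<Rightarrow> real"
    and \<Phi> :: "real \<Rightarrow> real" and G1 G2 :: "real \<Rightarrow> real"
  assumes c: "0 < c" "c < 1"
    and loss_nonneg: "\<And>h x y. sl h x y \<ge> 0"
    and \<Phi>_mono: "antimono \<Phi>"
    and \<Phi>_ge: "\<And>t. \<Phi> t \<ge> (if t \<le> 0 then 1 else 0)"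
    and G1: "mono_on {0..} G1" "concave_on {0..} G1"
    and G2: "mono_on {0..} G2" "concave_on {0..} G2"
    and bound1: "\<And>D h. multi_dist MX n D \<Longrightarrow> h \<in> Hall MX n \<Longrightarrow> eloss D (sl h) < \<infinity> \<Longrightarrow>
        excess D (Hall MX n) (zo_loss n) h \<le> G1 (excess D (Hall MX n) sl h)"
    and bound2: "\<And>B r. bin_dist MX B \<Longrightarrow> r \<in> Rall MX \<Longrightarrow> eloss B (phi_loss \<Phi> r) < \<infinity> \<Longrightarrow>
        excess B (Rall MX) bin_zo_loss r \<le> G2 (excess B (Rall MX) (phi_loss \<Phi>) r)"
    and D: "multi_dist MX n D"
    and h: "h \<in> Hall MX n" and r: "r \<in> Rall MX"
    and fin: "eloss D (sl h) < \<infinity>" "eloss D (lphi_loss n c \<Phi> h r) < \<infinity>"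
  shows "excess D (Hall MX n \<times> Rall MX) (abs_loss n c) (h, r)
           \<le> G1 (excess D (Hall MX n) sl h)
             + (1 + c) * G2 (excess D (Rall MX) (lphi_loss n c \<Phi> h) r / c)
         \<and> ((\<exists>a. \<forall>t\<ge>0. G2 t = a * t) \<longrightarrow>
            excess D (Hall MX n \<times> Rall MX) (abs_loss n c) (h, r)
              \<le> G1 (excess D (Hall MX n) sl h)
                + G2 (excess D (Rall MX) (lphi_loss n c \<Phi> h) r))"
proof -
  have pD: "prob_space D" and sD: "sets D = sets (MX \<Otimes>\<^sub>M count_space {1..n})"
    using D by (auto simp: multi_dist_def)
  interpret D: prob_space D by (rule pD)
  have \<Phi>0: "0 \<le> \<Phi> t" for t
  proof -
    have "(0::real) \<le> (if t \<le> 0 then 1 else 0)" by simp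
    also note \<Phi>_ge[of t]
    finally show ?thesis .
  qed
  define A where "A j = eloss D (abs_loss n c j)" for j
  define Zo where "Zo g = eloss D (zo_loss n g)" for g
  define L where "L r' = eloss D (lphi_loss n c \<Phi> h r')" for r'
  define I0 where "I0 = (INF j\<in>Hall MX n \<times> Rall MX. A j)"
  define I1 where "I1 = (INF r'\<in>Rall MX. A (h, r'))"
  define Izo where "Izo = (INF g\<in>Hall MX n. Zo g)"
  define IL where "IL = (INF r'\<in>Rall MX. L r')"
  have Ale: "A j \<le> ennreal (1 + c)" for j
    unfolding A_def using c by (intro eloss_le[OF pD]) (auto simp: abs_loss_def)
  have Afin: "A j < \<infinity>" for j using Ale[of j] by (simp add: le_less_trans)
  have Zole: "Zo g \<le> ennreal 1" for g
    unfolding Zo_def by (intro eloss_le[OF pD]) (auto simp: zo_loss_def)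
  have Zofin: "Zo g < \<infinity>" for g using Zole[of g] by (simp add: le_less_trans)
  have I1le: "I1 \<le> A (h, r')" if "r' \<in> Rall MX" for r' unfolding I1_def using that by (rule INF_lower)
  have I0le: "I0 \<le> A j" if "j \<in> Hall MX n \<times> Rall MX" for j unfolding I0_def using that by (rule INF_lower)
  have Izole: "Izo \<le> Zo g" if "g \<in> Hall MX n" for g unfolding Izo_def using that by (rule INF_lower)
  have ILle: "IL \<le> L r" unfolding IL_def using r by (rule INF_lower)
  have I1fin: "I1 < \<infinity>" using I1le[OF r] Afin by (rule le_less_trans)
  have I0fin: "I0 < \<infinity>" using I0le[of "(h,r)"] h r Afin by (auto intro: le_less_trans)
  have Izofin: "Izo < \<infinity>" using Izole[OF h] Zofin by (rule le_less_trans)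
  have Lfin: "L r < \<infinity>" using fin(2) by (simp add: L_def)
  have ILfin: "IL < \<infinity>" using ILle Lfin by (rule le_less_trans)

  have key: "enn2real I1 + enn2real Izo \<le> enn2real (A (g, r')) + enn2real (Zo h)"
    if g: "g \<in> Hall MX n" and r': "r' \<in> Rall MX" for g r'
  proof -
    define g' where "g' x y = (if 0 < r' x then g x y else h x y)" for x y
    have r'0: "\<And>x. x \<notin> space MX \<Longrightarrow> r' x = 0" and [measurable]: "r' \<in> borel_measurable MX"
      using r' by (auto simp: Rall_def)
    have g'H: "g' \<in> Hall MX n"
      using g h unfolding Hall_def g'_def
      by (auto simp: r'0 intro!: measurable_If)
    have hp: "hpred n g' x = (if 0 < r' x then hpred n g x else hpred n h x)" for x
      by (simp add: hpred_def g'_def)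
    have "A (h, r') + Zo g' = (\<integral>\<^sup>+z. ennreal (abs_loss n c (h, r') (fst z) (snd z)) + ennreal (zo_loss n g' (fst z) (snd z)) \<partial>D)"
      unfolding A_def Zo_def eloss_def
      by (rule nn_integral_add[symmetric, OF meas_abs[OF h r' sD] meas_zo[OF g'H sD]])
    also have "\<dots> = (\<integral>\<^sup>+z. ennreal (abs_loss n c (g, r') (fst z) (snd z)) + ennreal (zo_loss n h (fst z) (snd z)) \<partial>D)"
    proof (rule nn_integral_cong)
      fix z
      have "abs_loss n c (h, r') (fst z) (snd z) + zo_loss n g' (fst z) (snd z)
          = abs_loss n c (g, r') (fst z) (snd z) + zo_loss n h (fst z) (snd z)"
        by (simp add: abs_loss_def zo_loss_def hp)
      moreover have "0 \<le> abs_loss n c (h, r') (fst z) (snd z)" "0 \<le> zo_loss n g' (fst z) (snd z)"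
        "0 \<le> abs_loss n c (g, r') (fst z) (snd z)" "0 \<le> zo_loss n h (fst z) (snd z)"
        using c by (auto simp: abs_loss_def zo_loss_def)
      ultimately show "ennreal (abs_loss n c (h, r') (fst z) (snd z)) + ennreal (zo_loss n g' (fst z) (snd z))
          = ennreal (abs_loss n c (g, r') (fst z) (snd z)) + ennreal (zo_loss n h (fst z) (snd z))"
        by (metis ennreal_plus)
    qed
    also have "\<dots> = A (g, r') + Zo h"
      unfolding A_def Zo_def eloss_def
      by (rule nn_integral_add[OF meas_abs[OF g r' sD] meas_zo[OF h sD]])
    finally have eq: "A (h, r') + Zo g' = A (g, r') + Zo h" .
    have "I1 + Izo \<le> A (h, r') + Zo g'" by (intro add_mono I1le Izole r' g'H)
    then have "I1 + Izo \<le> A (g, r') + Zo h" using eq by simp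
    then have "enn2real (I1 + Izo) \<le> enn2real (A (g, r') + Zo h)"
      using Afin Zofin by (intro enn2real_mono) auto
    then show ?thesis using I1fin Izofin Afin Zofin by (simp add: enn2real_plus)
  qed
  have step2: "enn2real I1 + enn2real Izo \<le> enn2real I0 + enn2real (Zo h)"
  proof -
    define t where "t = enn2real I1 + enn2real Izo - enn2real (Zo h)"
    have "t \<le> enn2real I0"
    proof (cases "t \<le> 0")
      case True then show ?thesis by (meson enn2real_nonneg order_trans)
    next
      case False
      have "ennreal t \<le> I0" unfolding I0_def
      proof (rule INF_greatest)
        fix j assume j: "j \<in> Hall MX n \<times> Rall MX"
        then obtain g r' where "j = (g, r')" "g \<in> Hall MX n" "r' \<in> Rall MX" by auto
        then have "t \<le> enn2real (A j)" using key unfolding t_def by force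
        then have "ennreal t \<le> ennreal (enn2real (A j))" by (rule ennreal_leI)
        also have "ennreal (enn2real (A j)) = A j" using Afin[of j] by (simp add: less_top)
        finally show "ennreal t \<le> A j" .
      qed
      then have "enn2real (ennreal t) \<le> enn2real I0" using I0fin by (intro enn2real_mono) auto
      then show ?thesis using False by simp
    qed
    then show ?thesis unfolding t_def by simp
  qed
  have exzo: "excess D (Hall MX n) (zo_loss n) h = enn2real (Zo h) - enn2real Izo"
    unfolding excess_def Zo_def Izo_def ..
  have b1: "enn2real (Zo h) - enn2real Izo \<le> G1 (excess D (Hall MX n) sl h)"
    using bound1[OF D h fin(1)] exzo by simp
  have exabs: "excess D (Hall MX n \<times> Rall MX) (abs_loss n c) (h, r) = enn2real (A (h, r)) - enn2real I0"
    unfolding excess_def A_def I0_def ..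
  define e where "e = excess D (Rall MX) (lphi_loss n c \<Phi> h) r"
  have e_eq: "e = enn2real (L r) - enn2real IL" unfolding e_def excess_def L_def IL_def ..
  have e0: "0 \<le> e" unfolding e_eq using ILle Lfin by (simp add: enn2real_mono)

  define Z where "Z = c + enn2real (Zo h)"
  have Zc: "c \<le> Z" and Z1: "Z \<le> 1 + c"
  proof -
    show "c \<le> Z" unfolding Z_def by simp
    have "enn2real (Zo h) \<le> enn2real (ennreal 1)" using Zole[of h] by (intro enn2real_mono) auto
    then show "Z \<le> 1 + c" unfolding Z_def by simp
  qed
  have Z0: "0 < Z" using Zc c by simp
  define B where "B = distr (density (D \<Otimes>\<^sub>M count_space {-1,1::int})
            (\<lambda>q. ennreal (1/Z) * (if snd q = 1 then ennreal c else ennreal ((\<lambda>z. zo_loss n h (fst z) (snd z)) (fst q)))))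
            (MX \<Otimes>\<^sub>M count_space {-1,1}) (\<lambda>q. (fst (fst q), snd q))"
  have BI: "(\<integral>\<^sup>+z. f z \<partial>B) = ennreal (1/Z) * (\<integral>\<^sup>+xy. (ennreal c * f (fst xy, 1) + ennreal (zo_loss n h (fst xy) (snd xy)) * f (fst xy, -1)) \<partial>D)"
    if "f \<in> borel_measurable (MX \<Otimes>\<^sub>M count_space {-1,1::int})" for f
    unfolding B_def using B_integral[OF pD sD meas_zo[OF h sD] that] by simp
  have zo0: "0 \<le> zo_loss n h x y" for x y by (simp add: zo_loss_def)
  have Bphi: "eloss B (phi_loss \<Phi> r') = ennreal (1/Z) * L r'" if r': "r' \<in> Rall MX" for r'
    unfolding eloss_def BI[OF meas_phi[OF \<Phi>_mono r']] L_def
  proof (intro arg_cong[where f="\<lambda>x. ennreal (1/Z) * x"] nn_integral_cong)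
    fix z :: "'x \<times> nat"
    have "ennreal c * ennreal (phi_loss \<Phi> r' (fst (fst z, 1::int)) (snd (fst z, 1::int))) +
          ennreal (zo_loss n h (fst z) (snd z)) * ennreal (phi_loss \<Phi> r' (fst (fst z, -1::int)) (snd (fst z, -1::int)))
       = ennreal (c * phi_loss \<Phi> r' (fst (fst z, 1::int)) (snd (fst z, 1::int)) + 
            zo_loss n h (fst z) (snd z) * phi_loss \<Phi> r' (fst (fst z, -1::int)) (snd (fst z, -1::int)))"
      using c by (intro ennreal_lin) (auto simp: zo0 phi_loss_def \<Phi>0)
    also have "c * phi_loss \<Phi> r' (fst (fst z, 1::int)) (snd (fst z, 1::int)) + 
            zo_loss n h (fst z) (snd z) * phi_loss \<Phi> r' (fst (fst z, -1::int)) (snd (fst z, -1::int))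
        = lphi_loss n c \<Phi> h r' (fst z) (snd z)"
      by (simp add: phi_loss_def lphi_loss_def zo_loss_def)
    finally show "ennreal c * ennreal (phi_loss \<Phi> r' (fst (fst z, 1::int)) (snd (fst z, 1::int))) +
          ennreal (zo_loss n h (fst z) (snd z)) * ennreal (phi_loss \<Phi> r' (fst (fst z, -1::int)) (snd (fst z, -1::int)))
          = ennreal (lphi_loss n c \<Phi> h r' (fst z) (snd z))" .
  qed
  have Bbin: "eloss B (bin_zo_loss r') = ennreal (1/Z) * A (h, r')" if r': "r' \<in> Rall MX" for r'
    unfolding eloss_def BI[OF meas_bin[OF r']] A_def
  proof (intro arg_cong[where f="\<lambda>x. ennreal (1/Z) * x"] nn_integral_cong)
    fix z :: "'x \<times> nat"
    have "ennreal c * ennreal (bin_zo_loss r' (fst (fst z, 1::int)) (snd (fst z, 1::int))) +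
          ennreal (zo_loss n h (fst z) (snd z)) * ennreal (bin_zo_loss r' (fst (fst z, -1::int)) (snd (fst z, -1::int)))
       = ennreal (c * bin_zo_loss r' (fst (fst z, 1::int)) (snd (fst z, 1::int)) + 
            zo_loss n h (fst z) (snd z) * bin_zo_loss r' (fst (fst z, -1::int)) (snd (fst z, -1::int)))"
      using c by (intro ennreal_lin) (auto simp: zo0 bin_zo_loss_def)
    also have "c * bin_zo_loss r' (fst (fst z, 1::int)) (snd (fst z, 1::int)) + 
            zo_loss n h (fst z) (snd z) * bin_zo_loss r' (fst (fst z, -1::int)) (snd (fst z, -1::int))
        = abs_loss n c (h, r') (fst z) (snd z)"
      by (cases "0 < r' (fst z)") (simp_all add: bin_zo_loss_def sgn01_def abs_loss_def zo_loss_def)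
    finally show "ennreal c * ennreal (bin_zo_loss r' (fst (fst z, 1::int)) (snd (fst z, 1::int))) +
          ennreal (zo_loss n h (fst z) (snd z)) * ennreal (bin_zo_loss r' (fst (fst z, -1::int)) (snd (fst z, -1::int)))
          = ennreal (abs_loss n c (h, r') (fst z) (snd z))" .
  qed
  have Bspace: "emeasure B (space B) = 1"
  proof -
    have "emeasure B (space B) = (\<integral>\<^sup>+z. 1 \<partial>B)" by simp
    also have "\<dots> = ennreal (1/Z) * (\<integral>\<^sup>+xy. (ennreal c + ennreal (zo_loss n h (fst xy) (snd xy))) \<partial>D)"
      by (subst BI) simp_all
    also have "\<dots> = ennreal (1/Z) * (ennreal c + Zo h)"
      unfolding Zo_def eloss_def
      by (subst nn_integral_add) (auto simp: meas_zo[OF h sD] D.emeasure_space_1)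
    also have "Zo h = ennreal (enn2real (Zo h))" using Zofin by simp
    also have "ennreal c + ennreal (enn2real (Zo h)) = ennreal Z"
      unfolding Z_def using c by (simp add: ennreal_plus)
    also have "ennreal (1/Z) * ennreal Z = 1" using Z0 by (simp add: ennreal_mult''[symmetric])
    finally show ?thesis .
  qed
  have bB: "bin_dist MX B"
    unfolding bin_dist_def using Bspace by (auto intro: prob_spaceI simp: B_def)
  have BLfin: "eloss B (phi_loss \<Phi> r) < \<infinity>" using Bphi[OF r] Lfin by (simp add: ennreal_mult_less_top)
  have exbin: "excess B (Rall MX) bin_zo_loss r = (1/Z) * (enn2real (A (h, r)) - enn2real I1)"
  proof -
    have "(INF r'\<in>Rall MX. eloss B (bin_zo_loss r')) = (INF r'\<in>Rall MX. ennreal (1/Z) * A (h, r'))"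
      by (rule INF_cong) (auto simp: Bbin)
    also have "\<dots> = ennreal (1/Z) * I1" unfolding I1_def using Z0 by (intro INF_cmult) simp
    finally show ?thesis unfolding excess_def using Bbin[OF r] Z0
      by (simp add: enn2real_mult right_diff_distrib)
  qed
  have exphi: "excess B (Rall MX) (phi_loss \<Phi>) r = (1/Z) * e"
  proof -
    have "(INF r'\<in>Rall MX. eloss B (phi_loss \<Phi> r')) = (INF r'\<in>Rall MX. ennreal (1/Z) * L r')"
      by (rule INF_cong) (auto simp: Bphi)
    also have "\<dots> = ennreal (1/Z) * IL" unfolding IL_def using Z0 by (intro INF_cmult) simp
    finally show ?thesis unfolding excess_def e_eq using Bphi[OF r] Z0
      by (simp add: enn2real_mult right_diff_distrib)
  qed
  define X where "X = enn2real (A (h, r)) - enn2real I1"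
  have X0: "0 \<le> X" unfolding X_def using I1le[OF r] Afin by (simp add: enn2real_mono)
  have "(1/Z) * X \<le> G2 ((1/Z) * e)" using bound2[OF bB r BLfin] exbin exphi X_def by simp
  then have XG: "X \<le> Z * G2 (e / Z)" using Z0 by (simp add: field_simps)
  have main: "excess D (Hall MX n \<times> Rall MX) (abs_loss n c) (h, r)
      \<le> G1 (excess D (Hall MX n) sl h) + Z * G2 (e / Z)"
    using exabs step2 b1 XG unfolding X_def by linarith
  have "0 \<le> Z * G2 (e / Z)" using X0 XG by linarith
  then have G2pos: "0 \<le> G2 (e / Z)" using Z0 by (simp add: zero_le_mult_iff)
  have "e / Z \<le> e / c" using e0 Zc c by (simp add: frac_le)
  then have "G2 (e / Z) \<le> G2 (e / c)" using G2(1) e0 Z0 c by (intro mono_onD[OF G2(1)]) auto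
  then have "Z * G2 (e / Z) \<le> (1 + c) * G2 (e / c)"
    using G2pos Z1 c by (intro mult_mono) auto
  moreover have lin: "Z * G2 (e / Z) = G2 e" if "\<exists>a. \<forall>t\<ge>0. G2 t = a * t"
  proof -
    from that obtain a where a: "\<forall>t\<ge>0. G2 t = a * t" by blast
    then show ?thesis using e0 Z0 by simp
  qed
  then have part1: "excess D (Hall MX n \<times> Rall MX) (abs_loss n c) (h, r)
      \<le> G1 (excess D (Hall MX n) sl h) + (1 + c) * G2 (e / c)"
    and part2: "(\<exists>a. \<forall>t\<ge>0. G2 t = a * t) \<longrightarrow> excess D (Hall MX n \<times> Rall MX) (abs_loss n c) (h, r)
      \<le> G1 (excess D (Hall MX n) sl h) + G2 e"
  proof -
    show "excess D (Hall MX n \<times> Rall MX) (abs_loss n c) (h, r)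
      \<le> G1 (excess D (Hall MX n) sl h) + (1 + c) * G2 (e / c)"
      using main \<open>Z * G2 (e / Z) \<le> (1 + c) * G2 (e / c)\<close> by linarith
    show "(\<exists>a. \<forall>t\<ge>0. G2 t = a * t) \<longrightarrow> excess D (Hall MX n \<times> Rall MX) (abs_loss n c) (h, r)
      \<le> G1 (excess D (Hall MX n) sl h) + G2 e"
    proof
      assume H: "\<exists>a. \<forall>t\<ge>0. G2 t = a * t"
      show "excess D (Hall MX n \<times> Rall MX) (abs_loss n c) (h, r)
        \<le> G1 (excess D (Hall MX n) sl h) + G2 e" using main lin[OF H] by linarith
    qed
  qed
  show ?thesis unfolding e_def[symmetric] using part1 part2 by blast
qed

end
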